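(* For all integers $r\ge 2$ and $e\ge 2$ there exists $n_0(r,e)$ such that $f_r(n,(r-1)e,e)=h_r(n,e)$ for all $n\ge n_0(r,e)$.
   Context: An $r$-graph is an $r$-uniform hypergraph. A $(v,e)$-configuration in an $r$-graph is a subgraph with $e$ edges and at most $v$ vertices. $f_r(n,v,e)$ denotes the maximum number of edges in an $r$-graph on $n$ vertices containing no $(v,e)$-configuration. A (Berge) cycle of length $k\ge 2$ in a hypergraph is an alternating sequence $v_1,e_1,v_2,e_2,\dots,v_k,e_k$ of distinct vertices $v_i$ and distinct edges $e_i$ such that $v_i,v_{i+1}\in e_i$ for each $i$ (indices mod $k$); e.g. a $2$-cycle is a pair of edges sharing two distinct vertices. The girth of an $r$-graph is the length of its shortest cycle (infinite if there is none). $h_r(n,g)$ denotes the maximum number of edges in an $r$-graph on $n$ vertices of girth greater than $g$. *)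

theory Defs
  imports Main
begin

definition r_graph :: "nat \<Rightarrow> nat \<Rightarrow> nat set set \<Rightarrow> bool" where
  "r_graph r n H \<longleftrightarrow> (\<forall>E\<in>H. E \<subseteq> {..<n} \<and> card E = r)"

definition has_config :: "nat set set \<Rightarrow> nat \<Rightarrow> nat \<Rightarrow> bool" where
  "has_config H v e \<longleftrightarrow> (\<exists>F. F \<subseteq> H \<and> card F = e \<and> card (\<Union>F) \<le> v)"

definition f_r :: "nat \<Rightarrow> nat \<Rightarrow> nat \<Rightarrow> nat \<Rightarrow> nat" where
  "f_r r n v e = Max {card H | H. r_graph r n H \<and> \<not> has_config H v e}"

definition has_berge_cycle :: "nat set set \<Rightarrow> nat \<Rightarrow> bool" where
  "has_berge_cycle H k \<longleftrightarrow> 2 \<le> k \<and> (\<exists>vs es.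
     inj_on vs {..<k} \<and> inj_on es {..<k} \<and>
     (\<forall>i<k. es i \<in> H \<and> vs i \<in> es i \<and> vs ((i + 1) mod k) \<in> es i))"

definition girth_gt :: "nat set set \<Rightarrow> nat \<Rightarrow> bool" where
  "girth_gt H g \<longleftrightarrow> (\<forall>k. 2 \<le> k \<and> k \<le> g \<longrightarrow> \<not> has_berge_cycle H k)"

definition h_r :: "nat \<Rightarrow> nat \<Rightarrow> nat \<Rightarrow> nat" where
  "h_r r n g = Max {card H | H. r_graph r n H \<and> girth_gt H g}"

end

theory Submission
  imports Defs
begin


lemma berge_mono: "has_berge_cycle F k \<Longrightarrow> F \<subseteq> H \<Longrightarrow> has_berge_cycle H k"
  unfolding has_berge_cycle_def by blast

lemma cyc_card:
  assumes k2: "2 \<le> k" and iv: "inj_on vs {..<k}"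
    and cyc: "\<forall>i<k. vs i \<in> es i \<and> vs ((i+1) mod k) \<in> es i"
    and cr: "\<forall>i<k. card (es i) = r" and r2: "r \<ge> 2"
  shows "card (\<Union>(es ` {..<k})) \<le> (r-1)*k"
proof -
  have eq: "\<Union>(es ` {..<k}) = (\<Union>i<k. es i - {vs i})"
  proof
    show "\<Union>(es ` {..<k}) \<subseteq> (\<Union>i<k. es i - {vs i})"
    proof
      fix x assume "x \<in> \<Union>(es ` {..<k})"
      then obtain i where i: "i < k" "x \<in> es i" by auto
      show "x \<in> (\<Union>i<k. es i - {vs i})"
      proof (cases "x = vs i")
        case False then show ?thesis using i by auto
      next
        case True
        define j where "j = (i + k - 1) mod k"
        have jk: "j < k" using k2 unfolding j_def by auto
        have jS: "(j+1) mod k = i"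
        proof -
          have "(j+1) mod k = ((i + k - 1) + 1) mod k" unfolding j_def by (simp add: mod_Suc_eq)
          also have "\<dots> = (i + k) mod k" using k2 by simp
          also have "\<dots> = i" using i by simp
          finally show ?thesis .
        qed
        have "j \<noteq> i"
        proof
          assume "j = i"
          then have "(i+1) mod k = i" using jS by simp
          then show False using i k2
          proof (cases "i + 1 < k")
            case True then show ?thesis using \<open>(i+1) mod k = i\<close> by simp
          next
            case False then have "i + 1 = k" using i by simp
            then show ?thesis using \<open>(i+1) mod k = i\<close> k2 by simp
          qed
        qed
        then have "vs j \<noteq> vs i" using iv jk i by (meson inj_on_eq_iff lessThan_iff)
        moreover have "x \<in> es j" using cyc jk jS True by metis
        ultimately show ?thesis using True jk by auto
      qed
    qed
  qed auto
  have "card (\<Union>i<k. es i - {vs i}) \<le> (\<Sum>i<k. card (es i - {vs i}))"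
    by (rule card_UN_le) simp
  also have "\<dots> = (\<Sum>i<k. r - 1)"
  proof (rule sum.cong)
    fix i assume "i \<in> {..<k}"
    then have "card (es i) = r" "vs i \<in> es i" using cr cyc by auto
    moreover have "finite (es i)" using \<open>card (es i) = r\<close> r2 by (intro card_ge_0_finite) simp
    ultimately show "card (es i - {vs i}) = r - 1" by simp
  qed simp
  finally show ?thesis using eq by (simp add: mult.commute)
qed



lemma mk_cycle:
  assumes "2 \<le> k" "inj_on vs {..<k}" "inj_on es {..<k}"
    "\<forall>i<k. es i \<in> F \<and> vs i \<in> es i \<and> vs ((i + 1) mod k) \<in> es i"
  shows "has_berge_cycle F k"
  unfolding has_berge_cycle_def
  apply (rule conjI, fact)
  apply (rule exI[of _ vs], rule exI[of _ es])
  apply (intro conjI)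
  using assms(2) apply assumption
  using assms(3) apply assumption
  using assms(4) apply assumption
  done

lemma walk_cycle:
  assumes fin: "finite F" and ne: "F \<noteq> {}"
    and deg: "\<forall>E\<in>F. \<exists>a b. a \<noteq> b \<and> a \<in> E \<and> b \<in> E \<and> a \<in> \<Union>(F-{E}) \<and> b \<in> \<Union>(F-{E})"
  shows "\<exists>k. 2 \<le> k \<and> k \<le> card F \<and> has_berge_cycle F k"
proof -
  define nxt where "nxt = (\<lambda>(E::nat set, x::nat). SOME (E', y). E' \<in> F \<and> E' \<noteq> E \<and> y \<in> E \<and> y \<in> E' \<and> y \<noteq> x)"
  have nxt_ok: "fst (nxt (E,x)) \<in> F \<and> fst (nxt (E,x)) \<noteq> E \<and> snd (nxt (E,x)) \<in> E \<and> snd (nxt (E,x)) \<in> fst (nxt (E,x)) \<and> snd (nxt (E,x)) \<noteq> x"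
    if EF: "E \<in> F" for E x
  proof -
    obtain a b where ab: "a \<noteq> b" "a \<in> E" "b \<in> E" "a \<in> \<Union>(F-{E})" "b \<in> \<Union>(F-{E})" using bspec[OF deg EF] by (elim exE conjE) (rule that; assumption)
    have "\<exists>y. y \<in> E \<and> y \<in> \<Union>(F-{E}) \<and> y \<noteq> x"
    proof (cases "x = a")
      case True then show ?thesis using ab by blast
    next
      case False then show ?thesis using ab by blast
    qed
    then obtain y where y: "y \<in> E" "y \<in> \<Union>(F-{E})" "y \<noteq> x" by blast
    then obtain E' where E': "E' \<in> F" "E' \<noteq> E" "y \<in> E'" by blast
    define Q where "Q = (\<lambda>(E', y). E' \<in> F \<and> E' \<noteq> E \<and> y \<in> E \<and> y \<in> E' \<and> y \<noteq> x)"
    have "Q (E', y)" unfolding Q_def using y E' by simp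
    then have "Q (SOME p. Q p)" by (rule someI)
    moreover have "nxt (E,x) = (SOME p. Q p)" unfolding nxt_def Q_def by simp
    ultimately have "Q (nxt (E,x))" by simp
    then show ?thesis unfolding Q_def by (cases "nxt (E,x)") simp
  qed
  obtain E0 where E0: "E0 \<in> F" using ne by auto
  obtain x0 where x0: "x0 \<in> E0" using bspec[OF deg E0] by (elim exE conjE) (rule that)
  define w where "w n = (nxt ^^ n) (E0, x0)" for n
  define Ed where "Ed n = fst (w n)" for n
  define xd where "xd n = snd (w n)" for n
  have wS: "w (Suc n) = nxt (Ed n, xd n)" for n unfolding w_def Ed_def xd_def by simp
  have EdF: "Ed n \<in> F" for n
  proof (induction n)
    case 0 then show ?case using E0 unfolding Ed_def w_def by simp
  next
    case (Suc n) then show ?case using nxt_ok[of "Ed n" "xd n"] wS[of n] unfolding Ed_def[of "Suc n"] by simp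
  qed
  have st: "Ed (Suc n) \<noteq> Ed n \<and> xd (Suc n) \<in> Ed n \<and> xd (Suc n) \<in> Ed (Suc n) \<and> xd (Suc n) \<noteq> xd n" for n
    using nxt_ok[OF EdF[of n], of "xd n"] wS[of n] unfolding Ed_def[of "Suc n"] xd_def[of "Suc n"] by simp
  have xin: "xd n \<in> Ed n" for n
  proof (cases n)
    case 0 then show ?thesis using x0 unfolding xd_def Ed_def w_def by simp
  next
    case (Suc m) then show ?thesis using st[of m] by simp
  qed
  define P where "P j \<longleftrightarrow> (\<exists>i<j. Ed i = Ed j \<or> xd i = xd j)" for j
  have "\<not> inj_on Ed {..card F}"
  proof
    assume "inj_on Ed {..card F}"
    then have "card (Ed ` {..card F}) = card F + 1" by (simp add: card_image)
    moreover have "Ed ` {..card F} \<subseteq> F" using EdF by auto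
    then have "card (Ed ` {..card F}) \<le> card F" by (rule card_mono[OF fin])
    ultimately show False by simp
  qed
  then have "\<exists>i0 j0. i0 \<le> card F \<and> j0 \<le> card F \<and> i0 \<noteq> j0 \<and> Ed i0 = Ed j0"
    unfolding inj_on_def by auto
  then obtain i0 j0 where "i0 \<le> card F" "j0 \<le> card F" "i0 \<noteq> j0" "Ed i0 = Ed j0" by blast
  then have "\<exists>j. j \<le> card F \<and> P j"
  proof (cases "i0 < j0")
    case True then have "P j0" unfolding P_def using \<open>Ed i0 = Ed j0\<close> by auto
    then show ?thesis using \<open>j0 \<le> card F\<close> by blast
  next
    case False then have "j0 < i0" using \<open>i0 \<noteq> j0\<close> by simp
    then have "P i0" unfolding P_def using \<open>Ed i0 = Ed j0\<close> by auto
    then show ?thesis using \<open>i0 \<le> card F\<close> by blast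
  qed
  then obtain j1 where j1: "j1 \<le> card F" "P j1" by blast
  define j where "j = (LEAST j. P j)"
  have jP: "P j" unfolding j_def using j1(2) by (rule LeastI)
  have "j \<le> j1" unfolding j_def using j1(2) by (rule Least_le)
  then have jle: "j \<le> card F" using j1(1) by simp
  have jmin: "\<not> P j'" if "j' < j" for j' using that unfolding j_def by (rule not_less_Least)
  have distE: "Ed a \<noteq> Ed b" if "a < b" "b < j" for a b using jmin[OF that(2)] that(1) unfolding P_def by blast
  have distx: "xd a \<noteq> xd b" if "a < b" "b < j" for a b using jmin[OF that(2)] that(1) unfolding P_def by blast
  have injE: "inj_on (\<lambda>t. Ed (i + t)) {..<j - i}" for i
  proof (rule inj_onI)
    fix a b assume a: "a \<in> {..<j - i}" and b: "b \<in> {..<j - i}" and eq: "Ed (i + a) = Ed (i + b)"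
    show "a = b"
    proof (rule ccontr)
      assume "a \<noteq> b"
      moreover have "i + a < j" "i + b < j" using a b by auto
      ultimately show False using distE[of "i+a" "i+b"] distE[of "i+b" "i+a"] eq by (cases "a < b") auto
    qed
  qed
  show ?thesis
  proof (cases "\<exists>i<j. xd i = xd j")
    case True
    then obtain i where i: "i < j" "xd i = xd j" by blast
    define k where "k = j - i"
    define vs where "vs t = xd (i + t)" for t
    define es where "es t = Ed (i + t)" for t
    have k1: "k \<noteq> 1"
    proof
      assume "k = 1" then have "j = Suc i" unfolding k_def using i by simp
      then show False using st[of i] i by simp
    qed
    have k2: "2 \<le> k" using k1 i unfolding k_def by simp
    have iv: "inj_on vs {..<k}"
    proof (rule inj_onI)
      fix a b assume a: "a \<in> {..<k}" and b: "b \<in> {..<k}" and eq: "vs a = vs b"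
      show "a = b"
      proof (rule ccontr)
        assume "a \<noteq> b"
        moreover have "i + a < j" "i + b < j" using a b unfolding k_def by auto
        moreover have "xd (i+a) = xd (i+b)" using eq unfolding vs_def .
        ultimately show False using distx[of "i+a" "i+b"] distx[of "i+b" "i+a"] by (cases "a < b") auto
      qed
    qed
    have ie: "inj_on es {..<k}" unfolding es_def k_def using injE[of i] .
    have cyc: "\<forall>t<k. es t \<in> F \<and> vs t \<in> es t \<and> vs ((t+1) mod k) \<in> es t"
    proof (intro allI impI conjI)
      fix t assume t: "t < k"
      show "es t \<in> F" "vs t \<in> es t" unfolding es_def vs_def using EdF xin by auto
      show "vs ((t+1) mod k) \<in> es t"
      proof (cases "t + 1 < k")
        case True then show ?thesis unfolding vs_def es_def using st[of "i+t"] by simp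
      next
        case False then have "t + 1 = k" using t by simp
        then have "j = Suc (i + t)" unfolding k_def using i by simp
        then show ?thesis unfolding vs_def es_def using st[of "i+t"] i \<open>t+1 = k\<close> by simp
      qed
    qed
    have "es ` {..<k} \<subseteq> F" using cyc by auto
    then have "card (es ` {..<k}) \<le> card F" using card_mono[OF fin] by blast
    then have "k \<le> card F" using card_image[OF ie] by simp
    then show ?thesis using mk_cycle[OF k2 iv ie cyc] k2 by blast
  next
    case False
    then obtain i where i: "i < j" "Ed i = Ed j" using jP unfolding P_def by blast
    have distx': "xd a \<noteq> xd b" if "a < b" "b \<le> j" for a b
      using distx[of a b] False that by (cases "b = j") auto
    define k where "k = j - i"
    define vs where "vs t = (if t = 0 then xd j else xd (i + t))" for t
    define es where "es t = Ed (i + t)" for t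
    have k1: "k \<noteq> 1"
    proof
      assume "k = 1" then have "j = Suc i" unfolding k_def using i by simp
      then show False using st[of i] i by simp
    qed
    have k2: "2 \<le> k" using k1 i unfolding k_def by simp
    have iv: "inj_on vs {..<k}"
    proof (rule inj_onI)
      fix a b assume a: "a \<in> {..<k}" and b: "b \<in> {..<k}" and eq: "vs a = vs b"
      have ia: "i + a < j" and ib: "i + b < j" using a b unfolding k_def by auto
      show "a = b"
      proof (rule ccontr)
        assume ne: "a \<noteq> b"
        show False
        proof (cases "a = 0")
          case True then have "b \<noteq> 0" using ne by simp
          then have "xd j = xd (i+b)" using eq True unfolding vs_def by simp
          then show False using distx'[of "i+b" j] ib by simp
        next
          case False note a0 = this
          show False
          proof (cases "b = 0")
            case True then have "xd (i+a) = xd j" using eq a0 unfolding vs_def by simp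
            then show False using distx'[of "i+a" j] ia by simp
          next
            case False then have "xd (i+a) = xd (i+b)" using eq a0 unfolding vs_def by simp
            then show False using distx'[of "i+a" "i+b"] distx'[of "i+b" "i+a"] ia ib ne by (cases "a < b") auto
          qed
        qed
      qed
    qed
    have ie: "inj_on es {..<k}" unfolding es_def k_def using injE[of i] .
    have cyc: "\<forall>t<k. es t \<in> F \<and> vs t \<in> es t \<and> vs ((t+1) mod k) \<in> es t"
    proof (intro allI impI conjI)
      fix t assume t: "t < k"
      show "es t \<in> F" unfolding es_def using EdF by auto
      show "vs t \<in> es t" unfolding es_def vs_def using xin i by auto
      show "vs ((t+1) mod k) \<in> es t"
      proof (cases "t + 1 < k")
        case True then show ?thesis unfolding vs_def es_def using st[of "i+t"] by simp
      next
        case False then have "t + 1 = k" using t by simp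
        then have "j = Suc (i + t)" unfolding k_def using i by simp
        then show ?thesis unfolding vs_def es_def using st[of "i+t"] i \<open>t+1 = k\<close> by simp
      qed
    qed
    have "es ` {..<k} \<subseteq> F" using cyc by auto
    then have "card (es ` {..<k}) \<le> card F" using card_mono[OF fin] by blast
    then have "k \<le> card F" using card_image[OF ie] by simp
    then show ?thesis using mk_cycle[OF k2 iv ie cyc] k2 by blast
  qed
qed



lemma two_elems:
  assumes "2 \<le> card A" obtains a b where "a \<noteq> b" "a \<in> A" "b \<in> A"
proof -
  have fin: "finite A" using assms by (intro card_ge_0_finite) simp
  have "A \<noteq> {}" using assms by auto
  then obtain a where a: "a \<in> A" by blast
  have "card (A - {a}) \<ge> 1" using assms a fin by simp
  then have "card (A - {a}) \<noteq> 0" by simp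
  then have "A - {a} \<noteq> {}" by (metis card.empty)
  then obtain b where "b \<in> A - {a}" by blast
  then show thesis using that[of a b] a by blast
qed

lemma acyc:
  assumes "finite F" "F \<noteq> {}" "\<forall>E\<in>F. card E = r" "r \<ge> 2"
    "\<forall>k. 2 \<le> k \<and> k \<le> card F \<longrightarrow> \<not> has_berge_cycle F k"
  shows "(r-1)*card F + 1 \<le> card (\<Union>F)"
  using assms
proof (induction "card F" arbitrary: F rule: less_induct)
  case less
  have fin: "finite F" and ne: "F \<noteq> {}" and cr: "\<forall>E\<in>F. card E = r" and r2: "r \<ge> 2"
    and nc: "\<forall>k. 2 \<le> k \<and> k \<le> card F \<longrightarrow> \<not> has_berge_cycle F k" using less.prems by auto
  have finE: "finite E" if "E \<in> F" for E using cr that r2 by (intro card_ge_0_finite) simp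
  show ?case
  proof (cases "\<exists>E\<in>F. card (E \<inter> \<Union>(F - {E})) \<le> 1")
    case True
    then obtain E where EF: "E \<in> F" and c1: "card (E \<inter> \<Union>(F-{E})) \<le> 1" by blast
    have cE: "card E = r" using cr EF by blast
    show ?thesis
    proof (cases "F - {E} = {}")
      case True then have "F = {E}" using EF by auto
      then show ?thesis using cE r2 by simp
    next
      case False
      define F' where "F' = F - {E}"
      have lt: "card F' < card F" unfolding F'_def by (rule card_Diff1_less[OF fin EF])
      have "card F' = card F - 1" unfolding F'_def using fin EF by (simp add: card_Diff_singleton)
      moreover have "card F > 0" using fin EF card_gt_0_iff by blast
      ultimately have cF: "card F = card F' + 1" by simp
      have nc': "\<forall>k. 2 \<le> k \<and> k \<le> card F' \<longrightarrow> \<not> has_berge_cycle F' k"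
      proof (intro allI impI)
        fix k assume k: "2 \<le> k \<and> k \<le> card F'"
        show "\<not> has_berge_cycle F' k"
        proof
          assume "has_berge_cycle F' k"
          then have "has_berge_cycle F k" by (rule berge_mono) (auto simp: F'_def)
          then show False using nc k lt by auto
        qed
      qed
      have IH: "(r-1)*card F' + 1 \<le> card (\<Union>F')"
        using less.hyps[OF lt] fin False cr r2 nc' unfolding F'_def by auto
      have finU: "finite (\<Union>F')" unfolding F'_def using fin finE by auto
      have U: "\<Union>F = E \<union> \<Union>F'" unfolding F'_def using EF by auto
      have eqU: "E \<union> \<Union>F' = \<Union>F' \<union> (E - \<Union>F')" by auto
      have "card (\<Union>F' \<union> (E - \<Union>F')) = card (\<Union>F') + card (E - \<Union>F')"
        by (rule card_Un_disjoint) (use finU finE[OF EF] in auto)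
      then have "card (E \<union> \<Union>F') = card (\<Union>F') + card (E - \<Union>F')" using eqU by simp
      moreover have "card (E - \<Union>F') = card E - card (E \<inter> \<Union>F')"
        by (rule card_Diff_subset_Int) (use finE[OF EF] in simp)
      moreover have "card (E \<inter> \<Union>F') \<le> 1" using c1 unfolding F'_def .
      ultimately have "card (\<Union>F) \<ge> card (\<Union>F') + (r - 1)" using U cE by simp
      then show ?thesis using IH cF r2 by (simp add: algebra_simps)
    qed
  next
    case False
    have deg: "\<forall>E\<in>F. \<exists>a b. a \<noteq> b \<and> a \<in> E \<and> b \<in> E \<and> a \<in> \<Union>(F-{E}) \<and> b \<in> \<Union>(F-{E})"
    proof
      fix E assume "E \<in> F"
      then have "\<not> card (E \<inter> \<Union>(F - {E})) \<le> 1" using False by blast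
      then have "2 \<le> card (E \<inter> \<Union>(F - {E}))" by simp
      then obtain a b where "a \<noteq> b" "a \<in> E \<inter> \<Union>(F - {E})" "b \<in> E \<inter> \<Union>(F - {E})" by (rule two_elems)
      then show "\<exists>a b. a \<noteq> b \<and> a \<in> E \<and> b \<in> E \<and> a \<in> \<Union>(F-{E}) \<and> b \<in> \<Union>(F-{E})" by blast
    qed
    obtain k where "2 \<le> k" "k \<le> card F" "has_berge_cycle F k" using walk_cycle[OF fin ne deg] by blast
    then show ?thesis using nc by blast
  qed
qed

lemma girth_noconfig:
  assumes "r \<ge> 2" "e \<ge> 1" "r_graph r n H" "girth_gt H e"
  shows "\<not> has_config H ((r-1)*e) e"
proof
  assume "has_config H ((r-1)*e) e"
  then obtain F where F: "F \<subseteq> H" "card F = e" "card (\<Union>F) \<le> (r-1)*e" unfolding has_config_def by blast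
  have fin: "finite F" using F(2) assms(2) by (intro card_ge_0_finite) simp
  have ne: "F \<noteq> {}" using F(2) assms(2) by auto
  have cr: "\<forall>E\<in>F. card E = r" using F(1) assms(3) unfolding r_graph_def by blast
  have nc: "\<forall>k. 2 \<le> k \<and> k \<le> card F \<longrightarrow> \<not> has_berge_cycle F k"
  proof (intro allI impI notI)
    fix k assume k: "2 \<le> k \<and> k \<le> card F" and "has_berge_cycle F k"
    have "has_berge_cycle H k" using berge_mono[OF \<open>has_berge_cycle F k\<close> F(1)] .
    then show False using assms(4) k F(2) unfolding girth_gt_def by blast
  qed
  have "(r-1)*card F + 1 \<le> card (\<Union>F)" by (rule acyc[OF fin ne cr assms(1) nc])
  then show False using F by simp
qed



definition closedH :: "nat set set \<Rightarrow> nat set set \<Rightarrow> bool" where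
  "closedH H B \<longleftrightarrow> B \<subseteq> H \<and> (\<forall>X\<in>H - B. X \<inter> \<Union>B = {})"

definition compH :: "nat set set \<Rightarrow> nat set \<Rightarrow> nat set set" where
  "compH H E = \<Inter>{B. closedH H B \<and> E \<in> B}"

lemma disj_sub: "X \<inter> S = {} \<Longrightarrow> T \<subseteq> S \<Longrightarrow> X \<inter> T = {}" by blast

lemma closed_H: "closedH H H" unfolding closedH_def by auto

lemma closed_meet: "closedH H B \<Longrightarrow> X \<in> H \<Longrightarrow> X \<inter> \<Union>B \<noteq> {} \<Longrightarrow> X \<in> B"
  unfolding closedH_def by blast

lemma comp_closed:
  assumes "E \<in> H" shows "closedH H (compH H E)"
proof -
  define BB where "BB = {B. closedH H B \<and> E \<in> B}"
  have HB: "H \<in> BB" unfolding BB_def using closed_H assms by auto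
  have sub: "\<Inter>BB \<subseteq> H" using HB by auto
  have dj: "X \<inter> \<Union>(\<Inter>BB) = {}" if X: "X \<in> H - \<Inter>BB" for X
  proof -
    obtain B where B: "B \<in> BB" "X \<notin> B" using X by auto
    then have "X \<inter> \<Union>B = {}" using X unfolding BB_def closedH_def by auto
    moreover have "\<Inter>BB \<subseteq> B" using B(1) by (rule Inter_lower)
    then have "\<Union>(\<Inter>BB) \<subseteq> \<Union>B" by (rule Union_mono)
    ultimately show ?thesis by (rule disj_sub)
  qed
  have "compH H E = \<Inter>BB" unfolding compH_def BB_def ..
  moreover have "closedH H (\<Inter>BB)" unfolding closedH_def
  proof (intro conjI ballI)
    show "\<Inter>BB \<subseteq> H" by (rule sub)
  next
    fix X assume "X \<in> H - \<Inter>BB" then show "X \<inter> \<Union>(\<Inter>BB) = {}" by (rule dj)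
  qed
  ultimately show ?thesis by simp
qed

lemma comp_mem: "E \<in> H \<Longrightarrow> E \<in> compH H E"
  unfolding compH_def by auto

lemma comp_min: "closedH H B \<Longrightarrow> E \<in> B \<Longrightarrow> compH H E \<subseteq> B"
  unfolding compH_def by auto

lemma comp_sub: assumes "E \<in> H" shows "compH H E \<subseteq> H"
  using comp_closed[OF assms] unfolding closedH_def by (elim conjE)

lemma closed_diff:
  assumes "closedH H A" "closedH H B" shows "closedH H (A - B)"
  unfolding closedH_def
proof (intro conjI ballI)
  show "A - B \<subseteq> H" using assms(1) unfolding closedH_def by auto
  fix X assume X: "X \<in> H - (A - B)"
  show "X \<inter> \<Union>(A - B) = {}"
  proof (cases "X \<in> A")
    case False
    then have "X \<inter> \<Union>A = {}" using assms(1) X unfolding closedH_def by auto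
    then show ?thesis by auto
  next
    case True
    then have XB: "X \<in> B" using X by auto
    show ?thesis
    proof (rule ccontr)
      assume "X \<inter> \<Union>(A - B) \<noteq> {}"
      then obtain Y x where Y: "Y \<in> A" "Y \<notin> B" "x \<in> X" "x \<in> Y" by auto
      have "Y \<in> H" using Y(1) assms(1) unfolding closedH_def by auto
      then have "Y \<inter> \<Union>B = {}" using Y(2) assms(2) unfolding closedH_def by auto
      then show False using XB Y by auto
    qed
  qed
qed

lemma comp_eq:
  assumes E: "E \<in> H" and X: "X \<in> compH H E" shows "compH H X = compH H E"
proof -
  have XH: "X \<in> H" using comp_sub[OF E] X by auto
  have s1: "compH H X \<subseteq> compH H E" using comp_min[OF comp_closed[OF E] X] .
  have "E \<in> compH H X"
  proof (rule ccontr)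
    assume nE: "E \<notin> compH H X"
    have "closedH H (compH H E - compH H X)" using closed_diff comp_closed E XH by blast
    moreover have "E \<in> compH H E - compH H X" using nE comp_mem[OF E] by auto
    ultimately have "compH H E \<subseteq> compH H E - compH H X" by (rule comp_min)
    then show False using X comp_mem[OF XH] by auto
  qed
  then have "compH H E \<subseteq> compH H X" using comp_min[OF comp_closed[OF XH]] by blast
  then show ?thesis using s1 by auto
qed

lemma comp_disj:
  assumes "E \<in> H" "E' \<in> H" "compH H E \<inter> compH H E' \<noteq> {}"
  shows "compH H E = compH H E'"
proof -
  obtain X where "X \<in> compH H E" "X \<in> compH H E'" using assms(3) by auto
  then show ?thesis using comp_eq assms(1,2) by metis
qed

lemma closed_vdisj:
  assumes "closedH H A" "closedH H B" "A \<inter> B = {}" shows "\<Union>A \<inter> \<Union>B = {}"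
proof (rule ccontr)
  assume "\<Union>A \<inter> \<Union>B \<noteq> {}"
  then obtain X Y x where XY: "X \<in> A" "Y \<in> B" "x \<in> X" "x \<in> Y" by auto
  have "Y \<in> H" using XY(2) assms(2) unfolding closedH_def by auto
  moreover have "Y \<notin> A" using XY(2) assms(3) by auto
  ultimately have "Y \<inter> \<Union>A = {}" using assms(1) unfolding closedH_def by auto
  then show False using XY by auto
qed

lemma card_insert_edge:
  assumes "finite U" "finite X" "card X = r" "X \<inter> U \<noteq> {}"
  shows "card (X \<union> U) + 1 \<le> card U + r"
proof -
  have eqU: "X \<union> U = U \<union> (X - U)" by auto
  have "card (U \<union> (X - U)) = card U + card (X - U)"
    by (rule card_Un_disjoint) (use assms in auto)
  moreover have "card (X - U) = card X - card (X \<inter> U)"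
    by (rule card_Diff_subset_Int) (use assms in simp)
  moreover have "card (X \<inter> U) \<ge> 1" using assms
    by (metis One_nat_def Suc_leI card_gt_0_iff finite_Int)
  moreover have "card (X \<inter> U) \<le> card X" using assms(2) by (intro card_mono) auto
  ultimately show ?thesis using eqU assms(3) by simp
qed

lemma grow:
  assumes fin: "finite H" and cr: "\<forall>E\<in>H. card E = r" and r1: "r \<ge> 1"
    and AH: "A \<subseteq> H" and At: "card A \<le> t"
  shows "\<exists>B. A \<subseteq> B \<and> B \<subseteq> H \<and> card (\<Union>B) + (r-1)*card A \<le> card (\<Union>A) + (r-1)*card B
    \<and> (card B = t \<or> (card B < t \<and> closedH H B)) \<and> (\<forall>C. closedH H C \<and> A \<subseteq> C \<longrightarrow> B \<subseteq> C)"
  using AH At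
proof (induction "t - card A" arbitrary: A rule: less_induct)
  case less
  have finE: "finite E" if "E \<in> H" for E using cr that r1 by (intro card_ge_0_finite) auto
  have finA: "finite A" using less.prems(1) fin finite_subset by blast
  show ?case
  proof (cases "card A = t \<or> closedH H A")
    case True
    then show ?thesis using less.prems by (intro exI[of _ A]) auto
  next
    case False
    then obtain X where X: "X \<in> H" "X \<notin> A" "X \<inter> \<Union>A \<noteq> {}"
      using less.prems(1) unfolding closedH_def by auto
    define A' where "A' = insert X A"
    have cA': "card A' = card A + 1" unfolding A'_def using X finA by simp
    have "card A < t" using False less.prems(2) by auto
    then have lt: "t - card A' < t - card A" using cA' by simp
    have A'H: "A' \<subseteq> H" unfolding A'_def using X less.prems(1) by auto
    have A't: "card A' \<le> t" using cA' \<open>card A < t\<close> by simp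
    obtain B where B: "A' \<subseteq> B" "B \<subseteq> H" "card (\<Union>B) + (r-1)*card A' \<le> card (\<Union>A') + (r-1)*card B"
      "card B = t \<or> (card B < t \<and> closedH H B)" "\<forall>C. closedH H C \<and> A' \<subseteq> C \<longrightarrow> B \<subseteq> C"
      using less.hyps[OF lt A'H A't] by blast
    have finU: "finite (\<Union>A)" using finA finE less.prems(1) by auto
    have "card (X \<union> \<Union>A) + 1 \<le> card (\<Union>A) + r"
      by (rule card_insert_edge[OF finU finE[OF X(1)]]) (use cr X in auto)
    moreover have "\<Union>A' = X \<union> \<Union>A" unfolding A'_def by auto
    ultimately have "card (\<Union>A') + 1 \<le> card (\<Union>A) + r" by simp
    then have v: "card (\<Union>B) + (r-1)*card A \<le> card (\<Union>A) + (r-1)*card B"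
      using B(3) cA' r1 by (simp add: algebra_simps)
    have "B \<subseteq> C" if C: "closedH H C" "A \<subseteq> C" for C
    proof -
      have "\<Union>A \<subseteq> \<Union>C" using C by auto
      then have "X \<inter> \<Union>C \<noteq> {}" using X by auto
      then have "X \<in> C" using closed_meet[OF C(1) X(1)] by blast
      then have "A' \<subseteq> C" unfolding A'_def using C by auto
      then show ?thesis using B(5) C by blast
    qed
    then show ?thesis using B v unfolding A'_def by (intro exI[of _ B]) auto
  qed
qed



lemma mod_next_ne: fixes i k :: nat assumes "2 \<le> k" "i < k" shows "(i+1) mod k \<noteq> i"
proof
  assume h: "(i+1) mod k = i"
  show False
  proof (cases "i + 1 < k")
    case True then show ?thesis using h by simp
  next
    case False then have "i + 1 = k" using assms by simp
    then show ?thesis using h assms by simp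
  qed
qed

lemma mod_prev: fixes i k :: nat assumes "2 \<le> k" "i < k" shows "\<exists>j<k. j \<noteq> i \<and> (j+1) mod k = i"
proof (cases "i = 0")
  case True
  then show ?thesis using assms by (intro exI[of _ "k - 1"]) auto
next
  case False
  then show ?thesis using assms by (intro exI[of _ "i - 1"]) auto
qed

lemma girth_insert:
  assumes gG: "girth_gt G g" and finE: "finite E" and c1: "card (E \<inter> \<Union>G) \<le> 1"
  shows "girth_gt (insert E G) g"
  unfolding girth_gt_def
proof (intro allI impI notI)
  fix k assume k: "2 \<le> k \<and> k \<le> g" and hc: "has_berge_cycle (insert E G) k"
  from hc obtain vs es where iv: "inj_on vs {..<k}" and ie: "inj_on es {..<k}"
    and cyc: "\<forall>i<k. es i \<in> insert E G \<and> vs i \<in> es i \<and> vs ((i + 1) mod k) \<in> es i"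
    unfolding has_berge_cycle_def by blast
  have k2: "2 \<le> k" using k by simp
  show False
  proof (cases "\<exists>j<k. es j = E")
    case True
    then obtain j where j: "j < k" "es j = E" by blast
    define j1 where "j1 = (j+1) mod k"
    have j1k: "j1 < k" unfolding j1_def using k2 by simp
    have j1j: "j1 \<noteq> j" unfolding j1_def using mod_next_ne[OF k2 j(1)] .
    have "es j1 \<noteq> es j" using ie j1k j(1) j1j by (meson inj_on_eq_iff lessThan_iff)
    then have "es j1 \<in> G" using cyc j1k j(2) by auto
    moreover have "vs j1 \<in> es j1" using cyc j1k by auto
    ultimately have bG: "vs j1 \<in> \<Union>G" by auto
    have bE: "vs j1 \<in> E" using cyc j unfolding j1_def by auto
    obtain j0 where j0: "j0 < k" "j0 \<noteq> j" "(j0+1) mod k = j" using mod_prev[OF k2 j(1)] by blast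
    have "es j0 \<noteq> es j" using ie j0 j(1) by (meson inj_on_eq_iff lessThan_iff)
    then have "es j0 \<in> G" using cyc j0(1) j(2) by auto
    moreover have "vs j \<in> es j0" using cyc j0 by metis
    ultimately have aG: "vs j \<in> \<Union>G" by auto
    have aE: "vs j \<in> E" using cyc j by auto
    have ab: "vs j \<noteq> vs j1"
    proof
      assume "vs j = vs j1" then have "j = j1" using inj_onD[OF iv] j(1) j1k by auto
      then show False using j1j by simp
    qed
    have "{vs j, vs j1} \<subseteq> E \<inter> \<Union>G" using aG aE bG bE by auto
    then have "card {vs j, vs j1} \<le> card (E \<inter> \<Union>G)" using finE by (intro card_mono) auto
    then show False using ab c1 by simp
  next
    case False
    then have "\<forall>i<k. es i \<in> G \<and> vs i \<in> es i \<and> vs ((i + 1) mod k) \<in> es i" using cyc by auto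
    then have "has_berge_cycle G k" by (rule mk_cycle[OF k2 iv ie])
    then show False using gG k unfolding girth_gt_def by blast
  qed
qed

lemma chain:
  fixes s :: nat
  assumes "girth_gt G0 g" "r_graph r n G0" "finite G0" "r \<ge> 2" "finite W" "W \<subseteq> {..<n}"
    "z < n" "z \<notin> W" "W \<inter> \<Union>G0 = {}" "(r-1)*s \<le> card W"
  shows "\<exists>G. G0 \<subseteq> G \<and> card G = card G0 + s \<and> girth_gt G g \<and> r_graph r n G \<and> finite G"
  using assms
proof (induction s arbitrary: G0 W z)
  case 0
  then show ?case by auto
next
  case (Suc s)
  have r2: "r \<ge> 2" using Suc.prems by simp
  have "(r-1)*1 \<le> (r-1)*Suc s" by (rule mult_le_mono2) simp
  then have "r - 1 \<le> card W" using Suc.prems(10) by simp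
  then obtain A where A: "A \<subseteq> W" "card A = r - 1" using obtain_subset_with_card_n by metis
  have finA: "finite A" using A(1) Suc.prems(5) finite_subset by blast
  have zA: "z \<notin> A" using A(1) Suc.prems(8) by auto
  define E where "E = insert z A"
  have cE: "card E = r" unfolding E_def using finA zA A(2) r2 by simp
  have finE: "finite E" unfolding E_def using finA by simp
  obtain a where a: "a \<in> A" using A(2) r2 by (metis card.empty all_not_in_conv diff_is_0_eq not_numeral_le_zero le_zero_eq one_le_numeral diff_le_self Suc_1 not_less_eq_eq)
  have aG: "a \<notin> \<Union>G0" using a A(1) Suc.prems(9) by auto
  have EG: "E \<notin> G0" using aG a unfolding E_def by auto
  have "E \<inter> \<Union>G0 \<subseteq> {z}" unfolding E_def using A(1) Suc.prems(9) by auto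
  then have "card (E \<inter> \<Union>G0) \<le> card {z}" by (intro card_mono) auto
  then have c1: "card (E \<inter> \<Union>G0) \<le> 1" by simp
  define G1 where "G1 = insert E G0"
  have g1: "girth_gt G1 g" unfolding G1_def by (rule girth_insert[OF Suc.prems(1) finE c1])
  have En: "E \<subseteq> {..<n}" unfolding E_def using A(1) Suc.prems(6,7) by auto
  have rg1: "r_graph r n G1" using Suc.prems(2) En cE unfolding G1_def r_graph_def by auto
  have fG1: "finite G1" unfolding G1_def using Suc.prems(3) by simp
  have cG1: "card G1 = card G0 + 1" unfolding G1_def using Suc.prems(3) EG by simp
  define W' where "W' = W - A"
  have fW': "finite W'" unfolding W'_def using Suc.prems(5) by simp
  have W'n: "W' \<subseteq> {..<n}" unfolding W'_def using Suc.prems(6) by auto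
  have an: "a < n" using a A(1) Suc.prems(6) by auto
  have aW': "a \<notin> W'" unfolding W'_def using a by auto
  have W'G1: "W' \<inter> \<Union>G1 = {}" unfolding W'_def G1_def E_def using Suc.prems(8,9) by auto
  have "card W' = card W - (r - 1)" unfolding W'_def using A Suc.prems(5) by (simp add: card_Diff_subset finA)
  moreover have "(r-1)*Suc s = (r-1)*s + (r-1)" by (simp only: mult_Suc_right add.commute)
  ultimately have cW': "(r-1)*s \<le> card W'" using Suc.prems(10) by linarith
  obtain G where G: "G1 \<subseteq> G" "card G = card G1 + s" "girth_gt G g" "r_graph r n G" "finite G"
    using Suc.IH[OF g1 rg1 fG1 r2 fW' W'n an aW' W'G1 cW'] by blast
  show ?case using G cG1 unfolding G1_def by (intro exI[of _ G]) auto
qed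



definition Dl :: "nat \<Rightarrow> nat \<Rightarrow> nat set" where "Dl r i = {(r-1)*i ..< (r-1)*i + (r-1)}"
definition Ec :: "nat \<Rightarrow> nat \<Rightarrow> nat \<Rightarrow> nat set" where
  "Ec r L i = insert ((r-1)*((i+1) mod L)) (Dl r i)"

lemma Dl_disj:
  assumes "i \<noteq> j" shows "Dl r i \<inter> Dl r j = {}"
proof -
  have *: "Dl r i \<inter> Dl r j = {}" if lt: "i < j" for i j
  proof -
    have "(r-1)*(i+1) \<le> (r-1)*j" using lt by (intro mult_le_mono2) simp
    then have "(r-1)*i + (r-1) \<le> (r-1)*j" by (simp only: distrib_left mult_1_right)
    then show ?thesis unfolding Dl_def by auto
  qed
  show ?thesis
  proof (cases "i < j")
    case True then show ?thesis by (rule *)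
  next
    case False then have "j < i" using assms by simp
    then have "Dl r j \<inter> Dl r i = {}" by (rule *)
    then show ?thesis by (simp add: Int_commute)
  qed
qed

lemma Dl_card: "card (Dl r i) = r - 1" unfolding Dl_def by simp

lemma Dl_fin: "finite (Dl r i)" unfolding Dl_def by simp

lemma p_in: "r \<ge> 2 \<Longrightarrow> (r-1)*m \<in> Dl r m" unfolding Dl_def by simp

lemma Ec_card:
  assumes "r \<ge> 2" "L \<ge> 2" "i < L" shows "card (Ec r L i) = r"
proof -
  have "(i+1) mod L \<noteq> i" using mod_next_ne assms by blast
  then have "Dl r ((i+1) mod L) \<inter> Dl r i = {}" by (rule Dl_disj)
  then have "(r-1)*((i+1) mod L) \<notin> Dl r i" using p_in[OF assms(1)] by blast
  then show ?thesis unfolding Ec_def using Dl_fin Dl_card assms(1) by simp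
qed

lemma Ec_sub:
  assumes "r \<ge> 2" "L \<ge> 2" "i < L" shows "Ec r L i \<subseteq> {..<(r-1)*L}"
proof -
  have "(r-1)*(i+1) \<le> (r-1)*L" using assms by (intro mult_le_mono2) simp
  then have "(r-1)*i + (r-1) \<le> (r-1)*L" by (simp only: distrib_left mult_1_right)
  then have a: "Dl r i \<subseteq> {..<(r-1)*L}" unfolding Dl_def by auto
  have "(i+1) mod L < L" using assms by simp
  then have "(r-1)*((i+1) mod L) < (r-1)*L" using assms by simp
  then show ?thesis using a unfolding Ec_def by auto
qed

lemma Ec_inj:
  assumes r2: "r \<ge> 2" and L3: "L \<ge> 3" shows "inj_on (Ec r L) {..<L}"
proof (rule inj_onI)
  fix i j assume i: "i \<in> {..<L}" and j: "j \<in> {..<L}" and eq: "Ec r L i = Ec r L j"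
  show "i = j"
  proof (rule ccontr)
    assume ne: "i \<noteq> j"
    have dj: "Dl r i \<inter> Dl r j = {}" using Dl_disj[OF ne] .
    have "Dl r i \<subseteq> Ec r L j" using eq unfolding Ec_def by auto
    then have "Dl r i \<subseteq> {(r-1)*((j+1) mod L)}" using dj unfolding Ec_def by auto
    then have "card (Dl r i) \<le> card {(r-1)*((j+1) mod L)}" by (intro card_mono) auto
    then have "card (Dl r i) \<le> 1" by simp
    then have r2': "r = 2" using Dl_card r2 by simp
    have "Dl r j \<subseteq> Ec r L i" using eq unfolding Ec_def by auto
    then have "Dl r j \<subseteq> {(r-1)*((i+1) mod L)}" using dj unfolding Ec_def by auto
    then have "j = (i+1) mod L" using r2' unfolding Dl_def by auto
    have "Dl r i \<subseteq> {(r-1)*((j+1) mod L)}" using \<open>Dl r i \<subseteq> {(r-1)*((j+1) mod L)}\<close> .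
    then have "i = (j+1) mod L" using r2' unfolding Dl_def by auto
    then have "i = ((i+1) mod L + 1) mod L" using \<open>j = (i+1) mod L\<close> by simp
    also have "\<dots> = (i + 2) mod L" by (simp add: mod_Suc_eq)
    finally have h: "(i + 2) mod L = i" by simp
    have iL: "i < L" using i by simp
    show False
    proof (cases "i + 2 < L")
      case True then show False using h by simp
    next
      case False
      then have "i + 2 < 2 * L" using iL L3 by simp
      then have "(i + 2) mod L = i + 2 - L" using False by (simp add: mod_if le_mod_geq)
      then show False using h L3 False by simp
    qed
  qed
qed

lemma closed_succ_all:
  fixes L :: nat
  assumes "L \<ge> 1" "I \<subseteq> {..<L}" "a \<in> I" "\<forall>i\<in>I. (i+1) mod L \<in> I"
  shows "I = {..<L}"
proof -
  have aL: "a < L" using assms by auto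
  have t: "(a + t) mod L \<in> I" for t
  proof (induction t)
    case 0 then show ?case using assms aL by simp
  next
    case (Suc t)
    have "(a + Suc t) mod L = ((a + t) mod L + 1) mod L" by (simp add: mod_Suc_eq)
    then show ?case using assms(4) Suc by simp
  qed
  have "j \<in> I" if "j < L" for j
  proof -
    have "(a + (L - a + j)) mod L = (L + j) mod L" using aL by simp
    also have "\<dots> = j" using that by simp
    finally show ?thesis using t[of "L - a + j"] by simp
  qed
  then show ?thesis using assms(2) by auto
qed

lemma Ec_lower:
  assumes r2: "r \<ge> 2" and L2: "L \<ge> 2" and IL: "I \<subseteq> {..<L}" and i0: "i0 \<in> I" "(i0+1) mod L \<notin> I"
  shows "(r-1)*card I + 1 \<le> card (\<Union>(Ec r L ` I))"
proof -
  have finI: "finite I" using IL finite_subset by blast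
  define p where "p = (r-1)*((i0+1) mod L)"
  have pD: "p \<in> Dl r ((i0+1) mod L)" unfolding p_def by (rule p_in[OF r2])
  have pn: "p \<notin> (\<Union>i\<in>I. Dl r i)"
  proof
    assume "p \<in> (\<Union>i\<in>I. Dl r i)"
    then obtain i where "i \<in> I" "p \<in> Dl r i" by blast
    moreover have "i \<noteq> (i0+1) mod L" using \<open>i \<in> I\<close> i0(2) by auto
    ultimately show False using Dl_disj pD by blast
  qed
  have cU: "card (\<Union>i\<in>I. Dl r i) = (\<Sum>i\<in>I. card (Dl r i))"
    by (rule card_UN_disjoint[OF finI]) (auto simp: Dl_fin Dl_disj)
  also have "\<dots> = (r-1)*card I" using Dl_card by simp
  finally have cU': "card (\<Union>i\<in>I. Dl r i) = (r-1)*card I" .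
  have sub: "insert p (\<Union>i\<in>I. Dl r i) \<subseteq> \<Union>(Ec r L ` I)" using i0(1) unfolding Ec_def p_def by auto
  have finU: "finite (\<Union>(Ec r L ` I))" using finI unfolding Ec_def by (auto simp: Dl_fin)
  have "card (insert p (\<Union>i\<in>I. Dl r i)) = (r-1)*card I + 1" using pn cU' finI by (simp add: Dl_fin)
  moreover have "card (insert p (\<Union>i\<in>I. Dl r i)) \<le> card (\<Union>(Ec r L ` I))" by (rule card_mono[OF finU sub])
  ultimately show ?thesis by simp
qed



lemma Ec_girth:
  assumes r2: "r \<ge> 2" and L3: "L \<ge> 3" and gL: "g < L"
  shows "girth_gt (Ec r L ` {..<L}) g"
  unfolding girth_gt_def
proof (intro allI impI notI)
  fix k assume k: "2 \<le> k \<and> k \<le> g" and hc: "has_berge_cycle (Ec r L ` {..<L}) k"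
  from hc obtain vs es where iv: "inj_on vs {..<k}" and ie: "inj_on es {..<k}"
    and cyc: "\<forall>i<k. es i \<in> Ec r L ` {..<L} \<and> vs i \<in> es i \<and> vs ((i + 1) mod k) \<in> es i"
    unfolding has_berge_cycle_def by blast
  have k2: "2 \<le> k" using k by simp
  have L2: "L \<ge> 2" using L3 by simp
  define I where "I = {i \<in> {..<L}. Ec r L i \<in> es ` {..<k}}"
  have IL: "I \<subseteq> {..<L}" unfolding I_def by auto
  have eqI: "Ec r L ` I = es ` {..<k}"
  proof
    show "Ec r L ` I \<subseteq> es ` {..<k}" unfolding I_def by auto
    show "es ` {..<k} \<subseteq> Ec r L ` I"
    proof
      fix X assume "X \<in> es ` {..<k}"
      then obtain t where t: "t < k" "X = es t" by auto
      then obtain i where "i < L" "es t = Ec r L i" using cyc by auto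
      then show "X \<in> Ec r L ` I" unfolding I_def using t by auto
    qed
  qed
  have injI: "inj_on (Ec r L) I" using inj_on_subset[OF Ec_inj[OF r2 L3] IL] .
  have cI: "card I = k"
  proof -
    have "card (Ec r L ` I) = card I" by (rule card_image[OF injI])
    moreover have "card (es ` {..<k}) = k" using card_image[OF ie] by simp
    ultimately show ?thesis using eqI by simp
  qed
  have "I \<noteq> {}" using cI k2 by auto
  then obtain a where a: "a \<in> I" by blast
  have "\<exists>i0\<in>I. (i0+1) mod L \<notin> I"
  proof (rule ccontr)
    assume "\<not> (\<exists>i0\<in>I. (i0+1) mod L \<notin> I)"
    then have "\<forall>i\<in>I. (i+1) mod L \<in> I" by blast
    then have "I = {..<L}" using closed_succ_all[OF _ IL a] L3 by simp
    then have "card I = L" by simp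
    then show False using cI k gL by simp
  qed
  then obtain i0 where i0: "i0 \<in> I" "(i0+1) mod L \<notin> I" by blast
  have lo: "(r-1)*card I + 1 \<le> card (\<Union>(Ec r L ` I))" by (rule Ec_lower[OF r2 L2 IL i0])
  have cr: "\<forall>i<k. card (es i) = r" using cyc Ec_card[OF r2 L2] by auto
  have cyc': "\<forall>i<k. vs i \<in> es i \<and> vs ((i+1) mod k) \<in> es i" using cyc by blast
  have up: "card (\<Union>(es ` {..<k})) \<le> (r-1)*k" by (rule cyc_card[OF k2 iv cyc' cr r2])
  show False using lo up eqI cI by simp
qed

lemma std:
  assumes r2: "r \<ge> 2" and e2: "e \<ge> 2" and nb: "(r-1)*(e+1) \<le> n"
  shows "\<exists>G. r_graph r n G \<and> girth_gt G e \<and> card G = n div (r-1)"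
proof -
  define L where "L = e + 1"
  have L3: "L \<ge> 3" unfolding L_def using e2 by simp
  have L2: "L \<ge> 2" using L3 by simp
  define C where "C = Ec r L ` {..<L}"
  define N where "N = (r-1)*L"
  have cC: "card C = L" unfolding C_def using card_image[OF Ec_inj[OF r2 L3]] by simp
  have gC: "girth_gt C e" unfolding C_def by (rule Ec_girth[OF r2 L3]) (simp add: L_def)
  have Nn: "N \<le> n" unfolding N_def L_def using nb .
  have subN: "\<Union>C \<subseteq> {..<N}" unfolding C_def N_def using Ec_sub[OF r2 L2] by blast
  have rgC: "r_graph r n C" unfolding r_graph_def
  proof
    fix X assume "X \<in> C"
    then obtain i where i: "i < L" "X = Ec r L i" unfolding C_def by auto
    then have "X \<subseteq> {..<N}" using Ec_sub[OF r2 L2] unfolding N_def by blast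
    then have "X \<subseteq> {..<n}" using Nn by auto
    moreover have "card X = r" using i Ec_card[OF r2 L2] by simp
    ultimately show "X \<subseteq> {..<n} \<and> card X = r" by simp
  qed
  have fC: "finite C" unfolding C_def by simp
  define W where "W = {N..<n}"
  have N0: "N > 0" unfolding N_def using r2 L3 by simp
  have z: "0 < n" using N0 Nn by simp
  have zW: "(0::nat) \<notin> W" unfolding W_def using N0 by simp
  have WC: "W \<inter> \<Union>C = {}" unfolding W_def using subN by auto
  define s where "s = (n - N) div (r-1)"
  have cs: "(r-1)*s \<le> card W" unfolding s_def W_def by simp
  obtain G where G: "C \<subseteq> G" "card G = card C + s" "girth_gt G e" "r_graph r n G" "finite G"
  proof -
    have finW: "finite W" unfolding W_def by simp
    have Wn: "W \<subseteq> {..<n}" unfolding W_def by auto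
    show ?thesis using chain[OF gC rgC fC r2 finW Wn z zW WC cs] that by blast
  qed
  have "n = (n - N) + (r-1)*L" using Nn unfolding N_def by simp
  then have "n div (r-1) = L + (n - N) div (r-1)" using r2
    by (metis div_mult_self2 One_nat_def Suc_1 diff_is_0_eq not_less_eq_eq)
  then have "card G = n div (r-1)" using G(2) cC unfolding s_def by simp
  then show ?thesis using G by blast
qed



definition SCyc :: "nat set set \<Rightarrow> nat \<Rightarrow> nat set set" where
  "SCyc H e = {E. \<exists>k vs es. 2 \<le> k \<and> k \<le> e \<and> inj_on vs {..<k} \<and> inj_on es {..<k} \<and>
     (\<forall>i<k. es i \<in> H \<and> vs i \<in> es i \<and> vs ((i+1) mod k) \<in> es i) \<and> E = es 0}"

lemma SCyc_sub: "SCyc H e \<subseteq> H"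
proof
  fix E assume "E \<in> SCyc H e"
  then obtain k :: nat and es where "2 \<le> k" "\<forall>i<k. es i \<in> H" "E = es 0" unfolding SCyc_def by blast
  then show "E \<in> H" by auto
qed

lemma cycle_SC:
  assumes "has_berge_cycle H' k" "H' \<subseteq> H" "k \<le> e"
  shows "\<exists>E\<in>H'. E \<in> SCyc H e"
proof -
  from assms(1) obtain vs es where k2: "2 \<le> k" and iv: "inj_on vs {..<k}" and ie: "inj_on es {..<k}"
    and cyc: "\<forall>i<k. es i \<in> H' \<and> vs i \<in> es i \<and> vs ((i + 1) mod k) \<in> es i"
    unfolding has_berge_cycle_def by blast
  have cyc': "\<forall>i<k. es i \<in> H \<and> vs i \<in> es i \<and> vs ((i + 1) mod k) \<in> es i" using cyc assms(2) by blast
  have "es 0 \<in> SCyc H e" unfolding SCyc_def using k2 assms(3) iv ie cyc' by blast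
  moreover have "es 0 \<in> H'" using cyc k2 by auto
  ultimately show ?thesis by blast
qed

lemma comp_K1:
  assumes r2: "r \<ge> 2" and finH: "finite H" and cr: "\<forall>E\<in>H. card E = r"
    and nc: "\<forall>F. F \<subseteq> H \<and> card F = e \<longrightarrow> (r-1)*e < card (\<Union>F)"
    and ESC: "E \<in> SCyc H e"
  shows "card (compH H E) < e \<and> card (\<Union>(compH H E)) \<le> (r-1) * card (compH H E)"
proof -
  from ESC obtain k vs es where k2: "2 \<le> k" and ke: "k \<le> e" and iv: "inj_on vs {..<k}" and ie: "inj_on es {..<k}"
    and cyc: "\<forall>i<k. es i \<in> H \<and> vs i \<in> es i \<and> vs ((i + 1) mod k) \<in> es i" and E: "E = es 0"
    unfolding SCyc_def by blast
  have EH: "E \<in> H" using E cyc k2 by auto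
  define K where "K = compH H E"
  have Kc: "closedH H K" unfolding K_def by (rule comp_closed[OF EH])
  define C where "C = es ` {..<k}"
  have cC: "card C = k" unfolding C_def using card_image[OF ie] by simp
  have crk: "\<forall>i<k. card (es i) = r" using cyc cr by auto
  have cyc': "\<forall>i<k. vs i \<in> es i \<and> vs ((i+1) mod k) \<in> es i" using cyc by blast
  have vC: "card (\<Union>C) \<le> (r-1)*k" unfolding C_def by (rule cyc_card[OF k2 iv cyc' crk r2])
  have inK: "i < k \<longrightarrow> es i \<in> K" for i
  proof (induction i)
    case 0 then show ?case using comp_mem[OF EH] E unfolding K_def by simp
  next
    case (Suc i)
    show ?case
    proof
      assume si: "Suc i < k"
      then have "es i \<in> K" using Suc by simp
      moreover have "vs (Suc i) \<in> es i" using cyc' si by (metis Suc_eq_plus1 Suc_lessD mod_less)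
      moreover have "vs (Suc i) \<in> es (Suc i)" using cyc' si by blast
      ultimately have "es (Suc i) \<inter> \<Union>K \<noteq> {}" by blast
      moreover have "es (Suc i) \<in> H" using cyc si by blast
      ultimately show "es (Suc i) \<in> K" using closed_meet[OF Kc] by blast
    qed
  qed
  have CK: "C \<subseteq> K" unfolding C_def using inK by auto
  have CH: "C \<subseteq> H" unfolding C_def using cyc by auto
  obtain B where B: "C \<subseteq> B" "B \<subseteq> H" "card (\<Union>B) + (r-1)*card C \<le> card (\<Union>C) + (r-1)*card B"
    "card B = e \<or> (card B < e \<and> closedH H B)" "\<forall>C'. closedH H C' \<and> C \<subseteq> C' \<longrightarrow> B \<subseteq> C'"
    using grow[OF finH cr _ CH, of e] r2 cC ke by auto
  have BK: "B \<subseteq> K" using B(5) Kc CK by blast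
  have vB: "card (\<Union>B) \<le> (r-1)*card B" using B(3) vC cC by simp
  show ?thesis
  proof (cases "card B = e")
    case True
    then show ?thesis using nc B(2) vB by auto
  next
    case False
    then have Bc: "closedH H B" and Be: "card B < e" using B(4) by auto
    have "E \<in> B" using B(1) E k2 unfolding C_def by auto
    then have "K \<subseteq> B" unfolding K_def by (rule comp_min[OF Bc])
    then have "K = B" using BK by auto
    then show ?thesis using Be vB unfolding K_def by simp
  qed
qed

lemma extend:
  assumes r2: "r \<ge> 2" and finH: "finite H" and cr: "\<forall>E\<in>H. card E = r"
    and nc: "\<forall>F. F \<subseteq> H \<and> card F = e \<longrightarrow> (r-1)*e < card (\<Union>F)"
    and UH: "U \<subseteq> H" and Ue: "card U < e" and vU: "card (\<Union>U) + 1 \<le> (r-1)*card U"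
    and XH: "X \<in> H" and dj: "compH H X \<inter> U = {}"
  shows "card (compH H X) < e - card U"
proof -
  define t where "t = e - card U"
  have t1: "1 \<le> t" unfolding t_def using Ue by simp
  have XX: "{X} \<subseteq> H" using XH by simp
  obtain B where B: "{X} \<subseteq> B" "B \<subseteq> H" "card (\<Union>B) + (r-1)*card {X} \<le> card (\<Union>{X}) + (r-1)*card B"
    "card B = t \<or> (card B < t \<and> closedH H B)" "\<forall>C'. closedH H C' \<and> {X} \<subseteq> C' \<longrightarrow> B \<subseteq> C'"
    using grow[OF finH cr _ XX, of t] r2 t1 by auto
  have Kc: "closedH H (compH H X)" by (rule comp_closed[OF XH])
  have BK: "B \<subseteq> compH H X" using B(5) Kc comp_mem[OF XH] by blast
  have cX: "card (\<Union>{X}) = r" using cr XH by simp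
  have vB: "card (\<Union>B) + (r-1) \<le> r + (r-1)*card B" using B(3) cX by simp
  show ?thesis
  proof (cases "card B = t")
    case True
    define F where "F = U \<union> B"
    have UB: "U \<inter> B = {}" using BK dj by auto
    have finU: "finite U" using UH finH finite_subset by blast
    have finB: "finite B" using B(2) finH finite_subset by blast
    have cF: "card F = e" unfolding F_def using card_Un_disjoint[OF finU finB UB] True Ue unfolding t_def by simp
    have FH: "F \<subseteq> H" unfolding F_def using UH B(2) by auto
    have "\<Union>F = \<Union>U \<union> \<Union>B" unfolding F_def by auto
    then have "card (\<Union>F) \<le> card (\<Union>U) + card (\<Union>B)" by (simp add: card_Un_le)
    also have "\<dots> \<le> (r-1)*card U - 1 + (1 + (r-1)*t)"
    proof -
      have "card (\<Union>B) \<le> 1 + (r-1)*t" using vB True r2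
        by (simp add: algebra_simps)
      then show ?thesis using vU by linarith
    qed
    also have "\<dots> = (r-1)*(card U + t)"
    proof -
      have "(r-1)*card U \<ge> 1" using vU by linarith
      then show ?thesis by (simp add: algebra_simps)
    qed
    also have "\<dots> = (r-1)*e" unfolding t_def using Ue by simp
    finally show ?thesis using nc FH cF by auto
  next
    case False
    then have Bc: "closedH H B" and Bt: "card B < t" using B(4) by auto
    have "compH H X \<subseteq> B" by (rule comp_min[OF Bc]) (use B(1) in auto)
    then have "card (compH H X) \<le> card B" using B(2) finH by (intro card_mono) (auto intro: finite_subset)
    then show ?thesis using Bt unfolding t_def by simp
  qed
qed



lemma comp_of_img:
  assumes "K \<in> compH H ` SC" obtains E where "E \<in> SC" "K = compH H E"
  using assms by blast

lemma main_bound: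
  assumes r2: "r \<ge> 2" and e2: "e \<ge> 2" and rg: "r_graph r n H" and ncf: "\<not> has_config H ((r-1)*e) e"
    and nb: "(r-1)*(e+1) \<le> n" and nb2: "e + (r-1)*e*e \<le> n div (r-1)"
  shows "\<exists>G. r_graph r n G \<and> girth_gt G e \<and> card H \<le> card G"
proof -
  have Hn: "H \<subseteq> Pow {..<n}" using rg unfolding r_graph_def by auto
  have finH: "finite H" using Hn by (rule finite_subset) simp
  have cr: "\<forall>E\<in>H. card E = r" using rg unfolding r_graph_def by auto
  have finE: "finite E" if "E \<in> H" for E using cr that r2 by (intro card_ge_0_finite) auto
  have nc: "\<forall>F. F \<subseteq> H \<and> card F = e \<longrightarrow> (r-1)*e < card (\<Union>F)"
  proof (intro allI impI)
    fix F assume F: "F \<subseteq> H \<and> card F = e"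
    have "\<not> card (\<Union>F) \<le> (r-1)*e" using ncf F unfolding has_config_def by blast
    then show "(r-1)*e < card (\<Union>F)" by simp
  qed
  have Vn: "\<Union>A \<subseteq> {..<n}" if "A \<subseteq> H" for A using that Hn by blast
  define SC where "SC = SCyc H e"
  define KK where "KK = compH H ` SC"
  define S where "S = \<Union>KK"
  have SCH: "SC \<subseteq> H" unfolding SC_def by (rule SCyc_sub)
  have finKK: "finite KK" unfolding KK_def using finite_subset[OF SCH finH] by simp
  have KKc: "closedH H K" if hK: "K \<in> KK" for K
  proof -
    obtain E where "E \<in> SC" "K = compH H E" using hK unfolding KK_def by blast
    then show ?thesis using comp_closed SCH by blast
  qed
  have KKH: "K \<subseteq> H" if "K \<in> KK" for K using KKc[OF that] unfolding closedH_def by blast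
  have KK1: "card K < e \<and> card (\<Union>K) \<le> (r-1)*card K" if hK: "K \<in> KK" for K
  proof -
    obtain E where "E \<in> SC" "K = compH H E" using hK unfolding KK_def by blast
    then show ?thesis using comp_K1[OF r2 finH cr nc] unfolding SC_def by blast
  qed
  have KKdisj: "K1 \<inter> K2 = {}" if hK: "K1 \<in> KK" "K2 \<in> KK" "K1 \<noteq> K2" for K1 K2
  proof (rule ccontr)
    assume ne: "K1 \<inter> K2 \<noteq> {}"
    obtain E1 where E1: "E1 \<in> SC" "K1 = compH H E1" using hK(1) unfolding KK_def by blast
    obtain E2 where E2: "E2 \<in> SC" "K2 = compH H E2" using hK(2) unfolding KK_def by blast
    have "compH H E1 = compH H E2" using comp_disj[of E1 H E2] E1 E2 SCH ne by blast
    then show False using hK(3) E1 E2 by simp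
  qed
  have KKvdisj: "\<Union>K1 \<inter> \<Union>K2 = {}" if "K1 \<in> KK" "K2 \<in> KK" "K1 \<noteq> K2" for K1 K2
    using closed_vdisj[OF KKc[OF that(1)] KKc[OF that(2)] KKdisj[OF that]] .
  have finK: "finite K" if "K \<in> KK" for K using KKH[OF that] finH finite_subset by blast
  have finVK: "finite (\<Union>K)" if "K \<in> KK" for K using finK[OF that] KKH[OF that] finE by blast
  have SH: "S \<subseteq> H" unfolding S_def using KKH by blast
  have finS: "finite S" using SH finH finite_subset by blast
  have inS: "E \<in> S" if "E \<in> SC" for E
  proof -
    have "compH H E \<in> KK" unfolding KK_def using that by blast
    moreover have "E \<in> compH H E" using comp_mem SCH that by blast
    ultimately show ?thesis unfolding S_def by blast
  qed
  have Sdisj: "\<Union>S \<inter> \<Union>(H - S) = {}"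
  proof (rule ccontr)
    assume "\<Union>S \<inter> \<Union>(H - S) \<noteq> {}"
    then obtain x Y X where xY: "x \<in> Y" "Y \<in> S" "x \<in> X" "X \<in> H - S" by blast
    obtain K where K: "K \<in> KK" "Y \<in> K" using xY(2) unfolding S_def by blast
    have "X \<notin> K" using xY(4) K(1) unfolding S_def by blast
    then have "X \<inter> \<Union>K = {}" using KKc[OF K(1)] xY(4) unfolding closedH_def by blast
    then show False using xY K by blast
  qed
  have gHS: "girth_gt (H - S) e" unfolding girth_gt_def
  proof (intro allI impI notI)
    fix k assume k: "2 \<le> k \<and> k \<le> e" and hc: "has_berge_cycle (H - S) k"
    obtain E where "E \<in> H - S" "E \<in> SCyc H e" using cycle_SC[OF hc _ ] k by blast
    then show False using inS unfolding SC_def by blast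
  qed
  have cardH: "card H = card (H - S) + card S" using card_Diff_subset[OF finS SH] card_mono[OF finH SH] by simp
  have cardS: "card S = (\<Sum>K\<in>KK. card K)" unfolding S_def
  proof (rule card_Union_disjoint)
    show "pairwise disjnt KK" unfolding pairwise_def disjnt_def using KKdisj by blast
    show "\<And>A. A \<in> KK \<Longrightarrow> finite A" using finK by blast
  qed
  have VS: "\<Union>S = (\<Union>K\<in>KK. \<Union>K)" unfolding S_def by blast
  have cardVS: "card (\<Union>S) = (\<Sum>K\<in>KK. card (\<Union>K))" unfolding VS
    by (rule card_UN_disjoint[OF finKK]) (use finVK KKvdisj in blast)+
  have finVS: "finite (\<Union>S)" using Vn[OF SH] finite_subset by blast
  have rdiv: "card H \<le> n div (r-1) \<Longrightarrow> ?thesis"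
  proof -
    assume a: "card H \<le> n div (r-1)"
    obtain G where "r_graph r n G" "girth_gt G e" "card G = n div (r-1)" using std[OF r2 e2 nb] by blast
    then show ?thesis using a by auto
  qed
  show ?thesis
  proof (cases "\<forall>K\<in>KK. (r-1)*card K \<le> card (\<Union>K)")
    case True
    have "(r-1)*card S = (\<Sum>K\<in>KK. (r-1)*card K)" unfolding cardS by (simp add: sum_distrib_left)
    also have "\<dots> \<le> (\<Sum>K\<in>KK. card (\<Union>K))" using True by (intro sum_mono) blast
    finally have dens: "(r-1)*card S \<le> card (\<Union>S)" using cardVS by simp
    show ?thesis
    proof (cases "\<exists>z<n. z \<notin> \<Union>S")
      case True
      then obtain z where z: "z < n" "z \<notin> \<Union>S" by blast
      have rgHS: "r_graph r n (H - S)" using rg unfolding r_graph_def by blast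
      have finHS: "finite (H - S)" using finH by simp
      obtain G where G: "H - S \<subseteq> G" "card G = card (H - S) + card S" "girth_gt G e" "r_graph r n G" "finite G"
        using chain[OF gHS rgHS finHS r2 finVS Vn[OF SH] z(1) z(2) Sdisj dens] by blast
      then show ?thesis using cardH by auto
    next
      case False
      have "H - S = {}"
      proof (rule ccontr)
        assume "H - S \<noteq> {}"
        then obtain X where X: "X \<in> H - S" by blast
        have "card X = r" using X cr by blast
        then have "X \<noteq> {}" using r2 by auto
        then obtain x where x: "x \<in> X" by blast
        have "x < n" using X x Hn by blast
        then have "x \<in> \<Union>S" using False by blast
        then show False using Sdisj X x by blast
      qed
      then have HS: "H = S" using SH by blast
      have "card (\<Union>S) \<le> card {..<n}" by (rule card_mono) (use Vn[OF SH] in auto)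
      then have "(r-1)*card H \<le> n" using dens HS by simp
      then have "card H \<le> n div (r-1)" using r2 less_eq_div_iff_mult_less_eq[of "r-1" "card H" n]
        by (simp add: mult.commute)
      then show ?thesis by (rule rdiv)
    qed
  next
    case False
    then obtain K0 where K0: "K0 \<in> KK" "card (\<Union>K0) < (r-1)*card K0" by (auto simp: not_le)
    have inv: "card (\<Union>(insert K0 J)) < e \<and> card (\<Union>(\<Union>(insert K0 J))) + 1 \<le> (r-1)*card (\<Union>(insert K0 J))"
      if "J \<subseteq> KK - {K0}" for J
    proof -
      have "finite J" using that finKK finite_subset by blast
      then show ?thesis using that
      proof (induction J rule: finite_induct)
        case empty
        then show ?case using KK1[OF K0(1)] K0(2) by simp
      next
        case (insert L J)
        define U where "U = \<Union>(insert K0 J)"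
        have IH: "card U < e" "card (\<Union>U) + 1 \<le> (r-1)*card U" using insert unfolding U_def by auto
        have L: "L \<in> KK" "L \<noteq> K0" "L \<notin> J" using insert by auto
        have UH: "U \<subseteq> H" unfolding U_def using K0(1) insert.prems KKH by blast
        have UL: "U \<inter> L = {}"
        proof -
          have "M \<inter> L = {}" if "M \<in> insert K0 J" for M
          proof -
            have "M \<in> KK" "M \<noteq> L" using that K0(1) insert.prems L by auto
            then show ?thesis using KKdisj L(1) by blast
          qed
          then show ?thesis unfolding U_def by blast
        qed
        obtain E' where E': "E' \<in> SC" "L = compH H E'" using L(1) unfolding KK_def by blast
        have E'H: "E' \<in> H" using E' SCH by blast
        have dj: "compH H E' \<inter> U = {}" using UL E' by blast
        have cL: "card L < e - card U" using extend[OF r2 finH cr nc UH IH(1) IH(2) E'H dj] E' by simp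
        have finU: "finite U" using UH finH finite_subset by blast
        have finL: "finite L" using finK[OF L(1)] .
        have eqU: "\<Union>(insert K0 (insert L J)) = U \<union> L" unfolding U_def by blast
        have cUL: "card (U \<union> L) = card U + card L" by (rule card_Un_disjoint[OF finU finL UL])
        have "card (\<Union>(U \<union> L)) \<le> card (\<Union>U) + card (\<Union>L)" by (simp add: card_Un_le)
        moreover have "card (\<Union>L) \<le> (r-1)*card L" using KK1[OF L(1)] by simp
        ultimately have "card (\<Union>(U \<union> L)) + 1 \<le> (r-1)*(card U + card L)" using IH(2)
          by (simp add: algebra_simps)
        then show ?case using eqU cUL cL by simp
      qed
    qed
    have "S = \<Union>(insert K0 (KK - {K0}))" unfolding S_def using K0(1) by blast
    then have Se: "card S < e" using inv[of "KK - {K0}"] by simp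
    define T where "T = H - S"
    define TT where "TT = compH H ` T"
    have TH: "T \<subseteq> H" unfolding T_def by blast
    have finT: "finite T" using finH unfolding T_def by simp
    have compT: "compH H X \<subseteq> T" if X: "X \<in> T" for X
    proof
      fix Y assume Y: "Y \<in> compH H X"
      have XH: "X \<in> H" using X TH by blast
      have YH: "Y \<in> H" using comp_sub[OF XH] Y by blast
      show "Y \<in> T"
      proof (rule ccontr)
        assume "Y \<notin> T"
        then have "Y \<in> S" using YH unfolding T_def by blast
        then obtain K where K: "K \<in> KK" "Y \<in> K" unfolding S_def by blast
        obtain E' where E': "E' \<in> SC" "K = compH H E'" using K(1) unfolding KK_def by blast
        have "compH H X = compH H E'" using comp_disj[of X H E'] XH E' SCH K Y by blast
        then have "X \<in> K" using comp_mem[OF XH] E' by simp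
        then have "X \<in> S" using K(1) unfolding S_def by blast
        then show False using X unfolding T_def by blast
      qed
    qed
    have K0H: "K0 \<subseteq> H" using KKH[OF K0(1)] .
    have K0e: "card K0 < e" using KK1[OF K0(1)] by simp
    have vK0: "card (\<Union>K0) + 1 \<le> (r-1)*card K0" using K0(2) by simp
    have compTsmall: "card (compH H X) \<le> e - 1" if X: "X \<in> T" for X
    proof -
      have XH: "X \<in> H" using X TH by blast
      have "K0 \<subseteq> S" unfolding S_def using K0(1) by blast
      then have "compH H X \<inter> K0 = {}" using compT[OF X] unfolding T_def by blast
      then have "card (compH H X) < e - card K0" by (rule extend[OF r2 finH cr nc K0H K0e vK0 XH])
      then show ?thesis by simp
    qed
    have compTacyc: "(r-1)*card (compH H X) + 1 \<le> card (\<Union>(compH H X))" if X: "X \<in> T" for X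
    proof -
      have XH: "X \<in> H" using X TH by blast
      define L where "L = compH H X"
      have LH: "L \<subseteq> H" unfolding L_def by (rule comp_sub[OF XH])
      have finL: "finite L" using LH finH finite_subset by blast
      have neL: "L \<noteq> {}" unfolding L_def using comp_mem[OF XH] by blast
      have crL: "\<forall>E\<in>L. card E = r" using LH cr by blast
      have ncL: "\<forall>k. 2 \<le> k \<and> k \<le> card L \<longrightarrow> \<not> has_berge_cycle L k"
      proof (intro allI impI notI)
        fix k assume k: "2 \<le> k \<and> k \<le> card L" and hc: "has_berge_cycle L k"
        have "card L \<le> e - 1" unfolding L_def by (rule compTsmall[OF X])
        then have "k \<le> e" using k by linarith
        then obtain E where E: "E \<in> L" "E \<in> SCyc H e" using cycle_SC[OF hc LH] by blast
        have "E \<in> S" using inS E(2) unfolding SC_def by blast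
        moreover have "E \<in> T" using E(1) compT[OF X] unfolding L_def by blast
        ultimately show False unfolding T_def by blast
      qed
      show ?thesis using acyc[OF finL neL crL r2 ncL] unfolding L_def .
    qed
    have finTT: "finite TT" unfolding TT_def using finT by simp
    have TTc: "closedH H L" if "L \<in> TT" for L using that TH comp_closed unfolding TT_def by blast
    have TTdisj: "L1 \<inter> L2 = {}" if hL: "L1 \<in> TT" "L2 \<in> TT" "L1 \<noteq> L2" for L1 L2
    proof (rule ccontr)
      assume ne: "L1 \<inter> L2 \<noteq> {}"
      obtain X1 where X1: "X1 \<in> T" "L1 = compH H X1" using hL(1) unfolding TT_def by blast
      obtain X2 where X2: "X2 \<in> T" "L2 = compH H X2" using hL(2) unfolding TT_def by blast
      have "compH H X1 = compH H X2" using comp_disj[of X1 H X2] X1 X2 TH ne by blast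
      then show False using hL(3) X1 X2 by simp
    qed
    have TTvdisj: "\<Union>L1 \<inter> \<Union>L2 = {}" if "L1 \<in> TT" "L2 \<in> TT" "L1 \<noteq> L2" for L1 L2
      using closed_vdisj[OF TTc[OF that(1)] TTc[OF that(2)] TTdisj[OF that]] .
    have TTsub: "L \<subseteq> T" if "L \<in> TT" for L using that compT unfolding TT_def by blast
    have finL: "finite L" if "L \<in> TT" for L using TTsub[OF that] finT finite_subset by blast
    have finVL: "finite (\<Union>L)" if "L \<in> TT" for L using TTsub[OF that] TH finL[OF that] finE by blast
    have TU: "T = \<Union>TT"
    proof
      show "T \<subseteq> \<Union>TT" unfolding TT_def using comp_mem TH by blast
      show "\<Union>TT \<subseteq> T" using TTsub by blast
    qed
    have cardT: "card T = (\<Sum>L\<in>TT. card L)" unfolding TU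
    proof (rule card_Union_disjoint)
      show "pairwise disjnt TT" unfolding pairwise_def disjnt_def using TTdisj by blast
      show "\<And>A. A \<in> TT \<Longrightarrow> finite A" using finL by blast
    qed
    have TTsmall: "card L \<le> e - 1" if "L \<in> TT" for L using that compTsmall unfolding TT_def by blast
    have TTacyc: "(r-1)*card L + 1 \<le> card (\<Union>L)" if "L \<in> TT" for L using that compTacyc unfolding TT_def by blast
    have VT: "(\<Union>L\<in>TT. \<Union>L) \<subseteq> {..<n}" using Vn[OF TH] TU by blast
    have cVT: "card (\<Union>L\<in>TT. \<Union>L) = (\<Sum>L\<in>TT. card (\<Union>L))"
      by (rule card_UN_disjoint[OF finTT]) (use finVL TTvdisj in blast)+
    have "(\<Sum>L\<in>TT. (r-1)*card L + 1) \<le> (\<Sum>L\<in>TT. card (\<Union>L))" using TTacyc by (intro sum_mono) blast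
    also have "\<dots> \<le> n" using cVT card_mono[OF _ VT] by simp
    finally have s1: "(\<Sum>L\<in>TT. (r-1)*card L + 1) \<le> n" .
    have "(\<Sum>L\<in>TT. (r-1)*card L + 1) = (\<Sum>L\<in>TT. (r-1)*card L) + (\<Sum>L\<in>TT. 1)"
      by (rule sum.distrib)
    also have "\<dots> = (r-1)*card T + card TT" unfolding cardT by (simp add: sum_distrib_left)
    finally have "(\<Sum>L\<in>TT. (r-1)*card L + 1) = (r-1)*card T + card TT" .
    then have A1: "(r-1)*card T + card TT \<le> n" using s1 by simp
    have "card T \<le> (\<Sum>L\<in>TT. e - 1)" unfolding cardT using TTsmall by (intro sum_mono) blast
    then have A2: "card T \<le> (e-1)*card TT" by (simp add: mult.commute)
    have A3: "card H \<le> e + card T" using cardH Se unfolding T_def by simp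
    have "card H \<le> n div (r-1)"
    proof (cases "(r-1)*e \<le> card TT")
      case True
      then have "(r-1)*(e + card T) \<le> n" using A1 by (simp add: algebra_simps)
      then have "e + card T \<le> n div (r-1)" using r2 less_eq_div_iff_mult_less_eq[of "r-1" "e + card T" n]
        by (simp add: mult.commute)
      then show ?thesis using A3 by simp
    next
      case False
      then have "card TT \<le> (r-1)*e" by simp
      then have "(e-1)*card TT \<le> (e-1)*((r-1)*e)" by (rule mult_le_mono2)
      also have "\<dots> \<le> e*((r-1)*e)" by (rule mult_le_mono1) simp
      finally have "card T \<le> (r-1)*e*e" using A2 by (simp add: algebra_simps)
      then show ?thesis using A3 nb2 by simp
    qed
    then show ?thesis by (rule rdiv)
  qed
qed



theorem proposition1p10:
  fixes r e :: nat
  assumes "r \<ge> 2" and "e \<ge> 2"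
  shows "\<exists>n0. \<forall>n\<ge>n0. f_r r n ((r - 1) * e) e = h_r r n e"
proof
  have r2: "r \<ge> 2" and e2: "e \<ge> 2" using assms by auto
  define n0 where "n0 = (r-1)*(e + 1 + (r-1)*e*e)"
  show "\<forall>n\<ge>n0. f_r r n ((r - 1) * e) e = h_r r n e"
  proof (intro allI impI)
    fix n assume nn0: "n \<ge> n0"
    have "(r-1)*(e+1) \<le> n0" unfolding n0_def by (intro mult_le_mono2) simp
    then have nb: "(r-1)*(e+1) \<le> n" using nn0 by simp
    have "r - 1 \<noteq> 0" using r2 by simp
    then have "n0 div (r-1) = e + 1 + (r-1)*e*e" unfolding n0_def by (rule nonzero_mult_div_cancel_left)
    moreover have "n0 div (r-1) \<le> n div (r-1)" using nn0 by (rule div_le_mono)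
    ultimately have nb2: "e + (r-1)*e*e \<le> n div (r-1)" by simp
    define Af where "Af = {card H | H. r_graph r n H \<and> \<not> has_config H ((r-1)*e) e}"
    define Ah where "Ah = {card H | H. r_graph r n H \<and> girth_gt H e}"
    have "Af \<subseteq> card ` Pow (Pow {..<n})" unfolding Af_def r_graph_def by blast
    then have finAf: "finite Af" by (rule finite_subset) simp
    have AhAf: "Ah \<subseteq> Af" unfolding Ah_def Af_def using girth_noconfig[OF r2] e2 by fastforce
    have g0: "girth_gt {} e" unfolding girth_gt_def has_berge_cycle_def
    proof (intro allI impI notI)
      fix k assume k: "2 \<le> k \<and> k \<le> e" and h: "2 \<le> k \<and> (\<exists>vs es. inj_on vs {..<k} \<and> inj_on es {..<k} \<and>
        (\<forall>i<k. es i \<in> {} \<and> vs i \<in> es i \<and> vs ((i + 1) mod k) \<in> es i))"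
      then obtain vs es where "\<forall>i<k. es i \<in> ({}::nat set set) \<and> vs i \<in> es i \<and> vs ((i + 1) mod k) \<in> es i" by blast
      then have a: "\<forall>i<k. es i \<in> ({}::nat set set)" by blast
      have "(0::nat) < k" using k by simp
      then have "es 0 \<in> ({}::nat set set)" using a by blast
      then show False by simp
    qed
    have "r_graph r n {}" unfolding r_graph_def by simp
    then have "0 \<in> Ah" unfolding Ah_def using g0 by force
    then have neAh: "Ah \<noteq> {}" by blast
    have finAh: "finite Ah" using finAf AhAf finite_subset by blast
    have le1: "Max Ah \<le> Max Af" by (rule Max_mono[OF AhAf neAh finAf])
    have neAf: "Af \<noteq> {}" using neAh AhAf by blast
    have "Max Af \<in> Af" by (rule Max_in[OF finAf neAf])
    then obtain H where H: "Max Af = card H" "r_graph r n H" "\<not> has_config H ((r-1)*e) e" unfolding Af_def by blast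
    obtain G where G: "r_graph r n G" "girth_gt G e" "card H \<le> card G" using main_bound[OF r2 e2 H(2) H(3) nb nb2] by blast
    have "card G \<in> Ah" unfolding Ah_def using G by blast
    then have "card G \<le> Max Ah" by (rule Max_ge[OF finAh])
    then have le2: "Max Af \<le> Max Ah" using H(1) G(3) by simp
    have "f_r r n ((r - 1) * e) e = Max Af" unfolding f_r_def Af_def ..
    moreover have "h_r r n e = Max Ah" unfolding h_r_def Ah_def ..
    ultimately show "f_r r n ((r - 1) * e) e = h_r r n e" using le1 le2 by simp
  qed
qed


end
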